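(* Let $F_X,F_Y$ be univariate distributions. The set $\mathfrak{Q}^{F_X,F_Y}$ of all bivariate quasi-distributions with margins $F_X,F_Y$ and the set $\mathfrak{D}^{F_X,F_Y}$ of all bivariate distributions with margins $F_X,F_Y$ are compact in the uniform norm (supremum norm on functions on $\overline{\mathbb{R}}^2$).
   Context: $\overline{\mathbb{R}}=\mathbb{R}\cup\{-\infty,\infty\}$. A univariate distribution is a nondecreasing function $G:\overline{\mathbb{R}}\to[0,1]$ with $G(-\infty)=0$, $G(\infty)=1$ (not necessarily right continuous). The volume of a rectangle $[x_1,x_2]\times[y_1,y_2]$ with respect to $F$ is $F(x_1,y_1)+F(x_2,y_2)-F(x_2,y_1)-F(x_1,y_2)$. A bivariate quasi-distribution is $F:\overline{\mathbb{R}}^2\to[0,1]$ with $F(x,-\infty)=F(-\infty,y)=0$, $F(\infty,\infty)=1$, and nonnegative volume for every rectangle with corners in $\overline{\mathbb{R}}^2$ intersecting the boundary (points with a coordinate $\pm\infty$); a bivariate distribution additionally has nonnegative volume for every rectangle. Its margins are $F(\cdot,\infty)$ and $F(\infty,\cdot)$. *)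

theory Defs
  imports "HOL-Analysis.Analysis" "HOL-Library.Extended_Real"
begin

definition univ_distribution :: "(ereal \<Rightarrow> real) \<Rightarrow> bool" where
  "univ_distribution G \<longleftrightarrow>
     mono G \<and> (\<forall>x. 0 \<le> G x \<and> G x \<le> 1) \<and> G (-\<infinity>) = 0 \<and> G \<infinity> = 1"

definition rect_volume :: "(ereal \<times> ereal \<Rightarrow> real) \<Rightarrow> ereal \<Rightarrow> ereal \<Rightarrow> ereal \<Rightarrow> ereal \<Rightarrow> real" where
  "rect_volume F x1 x2 y1 y2 = F (x1, y1) + F (x2, y2) - F (x2, y1) - F (x1, y2)"

definition meets_boundary :: "ereal \<Rightarrow> ereal \<Rightarrow> ereal \<Rightarrow> ereal \<Rightarrow> bool" where
  "meets_boundary x1 x2 y1 y2 \<longleftrightarrow>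
     \<bar>x1\<bar> = \<infinity> \<or> \<bar>x2\<bar> = \<infinity> \<or> \<bar>y1\<bar> = \<infinity> \<or> \<bar>y2\<bar> = \<infinity>"

definition biv_quasi_distribution :: "(ereal \<times> ereal \<Rightarrow> real) \<Rightarrow> bool" where
  "biv_quasi_distribution F \<longleftrightarrow>
     (\<forall>p. 0 \<le> F p \<and> F p \<le> 1) \<and>
     (\<forall>x. F (x, -\<infinity>) = 0) \<and> (\<forall>y. F (-\<infinity>, y) = 0) \<and> F (\<infinity>, \<infinity>) = 1 \<and>
     (\<forall>x1 x2 y1 y2. x1 \<le> x2 \<longrightarrow> y1 \<le> y2 \<longrightarrow> meets_boundary x1 x2 y1 y2 \<longrightarrow>
        0 \<le> rect_volume F x1 x2 y1 y2)"

definition biv_distribution :: "(ereal \<times> ereal \<Rightarrow> real) \<Rightarrow> bool" where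
  "biv_distribution F \<longleftrightarrow>
     biv_quasi_distribution F \<and>
     (\<forall>x1 x2 y1 y2. x1 \<le> x2 \<longrightarrow> y1 \<le> y2 \<longrightarrow> 0 \<le> rect_volume F x1 x2 y1 y2)"

definition has_margins :: "(ereal \<times> ereal \<Rightarrow> real) \<Rightarrow> (ereal \<Rightarrow> real) \<Rightarrow> (ereal \<Rightarrow> real) \<Rightarrow> bool" where
  "has_margins F FX FY \<longleftrightarrow> (\<forall>x. F (x, \<infinity>) = FX x) \<and> (\<forall>y. F (\<infinity>, y) = FY y)"

definition quasi_dists_with_margins :: "(ereal \<Rightarrow> real) \<Rightarrow> (ereal \<Rightarrow> real) \<Rightarrow> (ereal \<times> ereal \<Rightarrow> real) set" where
  "quasi_dists_with_margins FX FY = {F. biv_quasi_distribution F \<and> has_margins F FX FY}"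

definition dists_with_margins :: "(ereal \<Rightarrow> real) \<Rightarrow> (ereal \<Rightarrow> real) \<Rightarrow> (ereal \<times> ereal \<Rightarrow> real) set" where
  "dists_with_margins FX FY = {F. biv_distribution F \<and> has_margins F FX FY}"

definition bounded_funs :: "('a \<Rightarrow> real) set" where
  "bounded_funs = {f. bounded (range f)}"

definition sup_dist :: "('a \<Rightarrow> real) \<Rightarrow> ('a \<Rightarrow> real) \<Rightarrow> real" where
  "sup_dist f g =
     (if f \<in> bounded_funs \<and> g \<in> bounded_funs then (SUP x. \<bar>f x - g x\<bar>) else 0)"

lemma bdd_diff:
  assumes "f \<in> bounded_funs" "g \<in> bounded_funs"
  shows "bdd_above (range (\<lambda>x. \<bar>f x - g x\<bar>))"
proof -
  obtain A where A: "\<And>x. \<bar>f x\<bar> \<le> A" using assms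
    by (auto simp: bounded_funs_def bounded_iff)
  obtain B where B: "\<And>x. \<bar>g x\<bar> \<le> B" using assms
    by (auto simp: bounded_funs_def bounded_iff)
  have "\<bar>f x - g x\<bar> \<le> A + B" for x using A[of x] B[of x]
    by linarith
  then show ?thesis by (intro bdd_aboveI2) auto
qed

lemma Metric_space_sup_dist: "Metric_space bounded_funs sup_dist"
proof
  fix f g :: "'a \<Rightarrow> real"
  show "0 \<le> sup_dist f g"
  proof (cases "f \<in> bounded_funs \<and> g \<in> bounded_funs")
    case True
    then have "\<bar>f undefined - g undefined\<bar> \<le> (SUP x. \<bar>f x - g x\<bar>)"
      using bdd_diff by (intro cSUP_upper) auto
    then show ?thesis using True unfolding sup_dist_def
      by (smt (verit) abs_ge_zero)
  qed (auto simp add: sup_dist_def)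
next
  fix f g :: "'a \<Rightarrow> real"
  show "sup_dist f g = sup_dist g f" unfolding sup_dist_def
    by (simp add: abs_minus_commute conj_commute)
next
  fix f g :: "'a \<Rightarrow> real"
  assume f: "f \<in> bounded_funs" and g: "g \<in> bounded_funs"
  note b = bdd_diff[OF f g]
  show "(sup_dist f g = 0) = (f = g)"
  proof
    assume "sup_dist f g = 0"
    then have "\<And>x. \<bar>f x - g x\<bar> \<le> 0" unfolding sup_dist_def
      using cSUP_upper[OF UNIV_I b] f g by simp
    then show "f = g" by (auto simp: fun_eq_iff)
  qed (simp add: sup_dist_def)
next
  fix f g h :: "'a \<Rightarrow> real"
  assume f: "f \<in> bounded_funs" and g: "g \<in> bounded_funs" and h: "h \<in> bounded_funs"
  have "(SUP x. \<bar>f x - h x\<bar>) \<le> (SUP x. \<bar>f x - g x\<bar>) + (SUP x. \<bar>g x - h x\<bar>)"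
  proof (rule cSUP_least)
    fix x
    have "\<bar>f x - h x\<bar> \<le> \<bar>f x - g x\<bar> + \<bar>g x - h x\<bar>" by linarith
    also have "\<dots> \<le> (SUP x. \<bar>f x - g x\<bar>) + (SUP x. \<bar>g x - h x\<bar>)"
      by (intro add_mono cSUP_upper bdd_diff f g h) auto
    finally show "\<bar>f x - h x\<bar> \<le> (SUP x. \<bar>f x - g x\<bar>) + (SUP x. \<bar>g x - h x\<bar>)" .
  qed simp
  then show "sup_dist f h \<le> sup_dist f g + sup_dist g h"
    using f g h by (simp add: sup_dist_def)
qed

definition uniform_topology :: "('a \<Rightarrow> real) topology" where
  "uniform_topology = Metric_space.mtopology bounded_funs sup_dist"

end

theory Submission
  imports Defs
begin

lemma floor_eq_abs_lt:
  fixes a b :: real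
  assumes "floor a = floor b"
  shows "\<bar>a - b\<bar> < 1"
proof -
  have "of_int (floor a) \<le> a" "a < of_int (floor a) + 1"
       "of_int (floor b) \<le> b" "b < of_int (floor b) + 1"
    by linarith+
  then show ?thesis using assms by linarith
qed

lemma floor_div_close:
  fixes a b e :: real
  assumes "e > 0" "floor (a / e) = floor (b / e)"
  shows "\<bar>a - b\<bar> < e"
proof -
  have "\<bar>a / e - b / e\<bar> < 1" using floor_eq_abs_lt[OF assms(2)] .
  also have "a / e - b / e = (a - b) / e" by (simp add: diff_divide_distrib)
  finally have "\<bar>a - b\<bar> / e < 1" using assms(1) by simp
  then show ?thesis using assms(1) by (simp add: divide_less_eq)
qed

lemma bounded01: "(\<forall>p. 0 \<le> f p \<and> f p \<le> 1) \<Longrightarrow> f \<in> bounded_funs"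
  unfolding bounded_funs_def bounded_iff
  by (rule CollectI, rule exI[of _ 1]) auto

lemma one_dim_cells:
  fixes G :: "'a \<Rightarrow> real"
  assumes G: "\<forall>x. 0 \<le> G x \<and> G x \<le> 1" and e: "e > 0"
  shows "\<exists>R c. finite R \<and> (\<forall>x. c x \<in> R) \<and> (\<forall>x. \<bar>G x - G (c x)\<bar> \<le> e)"
proof -
  define bin where "bin x = floor (G x / e)" for x
  define h where "h b = (SOME y. bin y = b)" for b
  define c where "c x = h (bin x)" for x
  have bin_range: "range bin \<subseteq> {0..floor (1/e)}"
  proof
    fix b assume "b \<in> range bin"
    then obtain x where "b = bin x" by auto
    moreover have "0 \<le> G x / e" "G x / e \<le> 1 / e" using G e
      by (auto simp: divide_right_mono)
    ultimately show "b \<in> {0..floor (1/e)}" unfolding bin_def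
      by (auto intro: floor_mono)
  qed
  have fin: "finite (h ` range bin)"
    using bin_range by (metis finite_imageI finite_atLeastAtMost_int finite_subset)
  have cx: "bin (c x) = bin x" for x
    unfolding c_def h_def by (rule someI[of _ x]) simp
  show ?thesis
  proof (intro exI conjI allI)
    show "finite (h ` range bin)" by (rule fin)
    show "c x \<in> h ` range bin" for x unfolding c_def by auto
    show "\<bar>G x - G (c x)\<bar> \<le> e" for x
      using floor_div_close[OF e, of "G x" "G (c x)"] cx[of x] unfolding bin_def by simp
  qed
qed

lemma compact_crit:
  fixes S :: "('a \<Rightarrow> real) set"
  assumes rng: "\<forall>F\<in>S. \<forall>p. 0 \<le> F p \<and> F p \<le> 1"
  assumes clo: "\<And>\<sigma> F. (\<forall>n. \<sigma> n \<in> S) \<Longrightarrow> (\<forall>p. (\<lambda>n. \<sigma> n p) \<longlonglongrightarrow> F p) \<Longrightarrow> F \<in> S"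
  assumes cells: "\<And>e. e > 0 \<Longrightarrow> \<exists>R c. finite R \<and> (\<forall>p. c p \<in> R) \<and> (\<forall>F\<in>S. \<forall>p. \<bar>F p - F (c p)\<bar> \<le> e)"
  shows "compactin uniform_topology S"
proof -
  interpret M: Metric_space bounded_funs sup_dist by (rule Metric_space_sup_dist)
  have SM: "S \<subseteq> bounded_funs"
  proof
    fix F assume "F \<in> S"
    then show "F \<in> bounded_funs" using rng by (intro bounded01) blast
  qed
  have sd_le: "\<bar>f p - g p\<bar> \<le> sup_dist f g" if "f \<in> bounded_funs" "g \<in> bounded_funs" for f g :: "'a \<Rightarrow> real" and p
  proof -
    have "\<bar>f p - g p\<bar> \<le> (SUP x. \<bar>f x - g x\<bar>)" by (rule cSUP_upper[OF UNIV_I bdd_diff[OF that]])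
    then show ?thesis using that by (simp add: sup_dist_def)
  qed
  have sd_ge: "sup_dist f g \<le> B" if "f \<in> bounded_funs" "g \<in> bounded_funs" "\<And>p. \<bar>f p - g p\<bar> \<le> B" for f g :: "'a \<Rightarrow> real" and B
  proof -
    have "(SUP x. \<bar>f x - g x\<bar>) \<le> B" by (rule cSUP_least) (auto simp: that(3))
    then show ?thesis using that by (simp add: sup_dist_def)
  qed
  have tb: "M.mtotally_bounded S"
    unfolding M.mtotally_bounded_def
  proof (intro allI impI)
    fix \<epsilon> :: real assume "\<epsilon> > 0"
    define e where "e = \<epsilon> / 4"
    have e: "e > 0" using \<open>\<epsilon> > 0\<close> by (simp add: e_def)
    obtain R c where R: "finite R" "\<forall>p. c p \<in> R" and c: "\<forall>F\<in>S. \<forall>p. \<bar>F p - F (c p)\<bar> \<le> e"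
      using cells[OF e] by blast
    define \<Phi> where "\<Phi> F = restrict (\<lambda>r. floor (F r / e)) R" for F :: "'a \<Rightarrow> real"
    have "\<Phi> ` S \<subseteq> PiE R (\<lambda>_. {0..floor (1/e)})"
    proof
      fix v assume "v \<in> \<Phi> ` S"
      then obtain F where F: "F \<in> S" "v = \<Phi> F" by auto
      have "0 \<le> F r / e \<and> F r / e \<le> 1 / e" for r using rng F e
        by (auto simp: divide_right_mono)
      then show "v \<in> PiE R (\<lambda>_. {0..floor (1/e)})" using F unfolding \<Phi>_def
        by (auto intro!: floor_mono)
    qed
    then have finPhi: "finite (\<Phi> ` S)"
      by (rule finite_subset) (simp add: finite_PiE R(1))
    define pick where "pick v = (SOME F. F \<in> S \<and> \<Phi> F = v)" for v
    have pick: "pick (\<Phi> F) \<in> S \<and> \<Phi> (pick (\<Phi> F)) = \<Phi> F" if "F \<in> S" for F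
      unfolding pick_def by (rule someI[of _ F]) (simp add: that)
    show "\<exists>K. finite K \<and> K \<subseteq> S \<and> S \<subseteq> (\<Union>x\<in>K. M.mball x \<epsilon>)"
    proof (intro exI conjI)
      show "finite (pick ` \<Phi> ` S)" using finPhi by simp
      show "pick ` \<Phi> ` S \<subseteq> S" using pick by auto
      show "S \<subseteq> (\<Union>x\<in>pick ` \<Phi> ` S. M.mball x \<epsilon>)"
      proof
        fix F assume F: "F \<in> S"
        define G where "G = pick (\<Phi> F)"
        have G: "G \<in> S" "\<Phi> G = \<Phi> F" using pick[OF F] by (auto simp: G_def)
        have close: "\<bar>G r - F r\<bar> < e" if "r \<in> R" for r
        proof -
          have "\<Phi> G r = \<Phi> F r" using G by simp
          then have "floor (G r / e) = floor (F r / e)" using that by (simp add: \<Phi>_def)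
          then show ?thesis by (rule floor_div_close[OF e])
        qed
        have "\<bar>G p - F p\<bar> \<le> 3 * e" for p
        proof -
          have "\<bar>G p - G (c p)\<bar> \<le> e" "\<bar>F p - F (c p)\<bar> \<le> e" using c G F by auto
          moreover have "\<bar>G (c p) - F (c p)\<bar> < e" using close R by auto
          ultimately show ?thesis by linarith
        qed
        then have "sup_dist G F \<le> 3 * e" using SM G F by (intro sd_ge) auto
        then have "sup_dist G F < \<epsilon>" using e unfolding e_def by linarith
        then have "F \<in> M.mball G \<epsilon>" using SM G F by auto
        moreover have "G \<in> pick ` \<Phi> ` S" using F by (auto simp: G_def)
        ultimately show "F \<in> (\<Union>x\<in>pick ` \<Phi> ` S. M.mball x \<epsilon>)" by blast
      qed
    qed
  qed
  show ?thesis
    unfolding uniform_topology_def M.compactin_sequentially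
  proof (intro conjI allI impI)
    show "S \<subseteq> bounded_funs" by (rule SM)
    fix \<sigma> :: "nat \<Rightarrow> 'a \<Rightarrow> real"
    assume "range \<sigma> \<subseteq> S"
    then obtain r where r: "strict_mono r" and C: "M.MCauchy (\<sigma> \<circ> r)"
      using tb unfolding M.mtotally_bounded_sequentially by blast
    define \<tau> where "\<tau> = \<sigma> \<circ> r"
    have \<tau>S: "\<tau> n \<in> S" for n using \<open>range \<sigma> \<subseteq> S\<close> by (auto simp: \<tau>_def)
    have \<tau>B: "\<tau> n \<in> bounded_funs" for n using \<tau>S SM by auto
    have cau: "\<exists>N. \<forall>n n'. N \<le> n \<longrightarrow> N \<le> n' \<longrightarrow> sup_dist (\<tau> n) (\<tau> n') < \<epsilon>" if "\<epsilon> > 0" for \<epsilon>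
      using C that unfolding M.MCauchy_def \<tau>_def by blast
    have "Cauchy (\<lambda>n. \<tau> n p)" for p
    proof (rule metric_CauchyI)
      fix \<epsilon> :: real assume "\<epsilon> > 0"
      then obtain N where N: "\<forall>n n'. N \<le> n \<longrightarrow> N \<le> n' \<longrightarrow> sup_dist (\<tau> n) (\<tau> n') < \<epsilon>"
        using cau by blast
      show "\<exists>M. \<forall>m\<ge>M. \<forall>n\<ge>M. dist (\<tau> m p) (\<tau> n p) < \<epsilon>"
      proof (intro exI allI impI)
        fix m n assume "N \<le> m" "N \<le> n"
        then have "sup_dist (\<tau> m) (\<tau> n) < \<epsilon>" using N by blast
        then show "dist (\<tau> m p) (\<tau> n p) < \<epsilon>"
          using sd_le[OF \<tau>B[of m] \<tau>B[of n], of p] by (simp add: dist_real_def)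
      qed
    qed
    then have conv: "(\<lambda>n. \<tau> n p) \<longlonglongrightarrow> lim (\<lambda>n. \<tau> n p)" for p
      by (simp add: Cauchy_convergent_iff convergent_LIMSEQ_iff)
    define F where "F p = lim (\<lambda>n. \<tau> n p)" for p
    have FS: "F \<in> S" using clo[of \<tau> F] \<tau>S conv by (auto simp: F_def)
    have FB: "F \<in> bounded_funs" using FS SM by auto
    have "limitin M.mtopology \<tau> F sequentially"
      unfolding M.limitin_metric
    proof (intro conjI allI impI)
      show "F \<in> bounded_funs" by (rule FB)
      fix \<epsilon> :: real assume "\<epsilon> > 0"
      then obtain N where N: "\<forall>n n'. N \<le> n \<longrightarrow> N \<le> n' \<longrightarrow> sup_dist (\<tau> n) (\<tau> n') < \<epsilon>/2"
        using cau[of "\<epsilon>/2"] by auto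
      show "\<forall>\<^sub>F n in sequentially. \<tau> n \<in> bounded_funs \<and> sup_dist (\<tau> n) F < \<epsilon>"
        unfolding eventually_sequentially
      proof (intro exI allI impI conjI)
        fix n assume n: "N \<le> n"
        show "\<tau> n \<in> bounded_funs" by (rule \<tau>B)
        have "\<bar>\<tau> n p - F p\<bar> \<le> \<epsilon>/2" for p
        proof -
          have "(\<lambda>m. \<bar>\<tau> n p - \<tau> m p\<bar>) \<longlonglongrightarrow> \<bar>\<tau> n p - F p\<bar>"
            unfolding F_def by (intro tendsto_intros conv)
          moreover have "\<forall>m\<ge>N. \<bar>\<tau> n p - \<tau> m p\<bar> \<le> \<epsilon>/2"
          proof (intro allI impI)
            fix m assume "N \<le> m"
            then have "sup_dist (\<tau> n) (\<tau> m) < \<epsilon>/2" using N n by blast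
            then show "\<bar>\<tau> n p - \<tau> m p\<bar> \<le> \<epsilon>/2" using sd_le[OF \<tau>B[of n] \<tau>B[of m], of p] by linarith
          qed
          ultimately show ?thesis by (intro LIMSEQ_le_const2) auto
        qed
        then have "sup_dist (\<tau> n) F \<le> \<epsilon>/2" using FB \<tau>B by (intro sd_ge) auto
        then show "sup_dist (\<tau> n) F < \<epsilon>" using \<open>\<epsilon> > 0\<close> by linarith
      qed
    qed
    then show "\<exists>l r. l \<in> S \<and> strict_mono r \<and> limitin M.mtopology (\<sigma> \<circ> r) l sequentially"
      using FS r unfolding \<tau>_def by blast
  qed
qed


lemma lim_ge_aux: "(\<And>n. a \<le> X n) \<Longrightarrow> X \<longlonglongrightarrow> (x::real) \<Longrightarrow> a \<le> x"
  by (rule LIMSEQ_le_const) auto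

lemma lim_le_aux: "(\<And>n. X n \<le> a) \<Longrightarrow> X \<longlonglongrightarrow> (x::real) \<Longrightarrow> x \<le> a"
  by (rule LIMSEQ_le_const2) auto

lemma lim_eq_aux: "(\<And>n. X n = a) \<Longrightarrow> X \<longlonglongrightarrow> (x::real) \<Longrightarrow> x = a"
proof -
  assume "\<And>n. X n = a" "X \<longlonglongrightarrow> x"
  moreover have "X = (\<lambda>n. a)" using \<open>\<And>n. X n = a\<close> by (rule ext)
  ultimately have "(\<lambda>n. a) \<longlonglongrightarrow> x" by simp
  then show "x = a" using LIMSEQ_unique[OF _ tendsto_const] by blast
qed

lemma rect_volume_lim:
  assumes "\<forall>p. (\<lambda>n. \<sigma> n p) \<longlonglongrightarrow> F p"
  shows "(\<lambda>n. rect_volume (\<sigma> n) x1 x2 y1 y2) \<longlonglongrightarrow> rect_volume F x1 x2 y1 y2"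
  unfolding rect_volume_def using assms by (intro tendsto_intros) auto

lemma quasi_closed:
  assumes S: "\<forall>n. \<sigma> n \<in> quasi_dists_with_margins FX FY"
    and L: "\<forall>p. (\<lambda>n. \<sigma> n p) \<longlonglongrightarrow> F p"
  shows "F \<in> quasi_dists_with_margins FX FY"
proof -
  have Q: "biv_quasi_distribution (\<sigma> n)" "has_margins (\<sigma> n) FX FY" for n
    using S by (auto simp: quasi_dists_with_margins_def)
  have Lp: "(\<lambda>n. \<sigma> n p) \<longlonglongrightarrow> F p" for p using L by blast
  have "0 \<le> F p \<and> F p \<le> 1" for p
  proof -
    have "0 \<le> \<sigma> n p \<and> \<sigma> n p \<le> 1" for n using Q(1)[of n] unfolding biv_quasi_distribution_def by (cases p) auto
    then show ?thesis using lim_ge_aux[OF _ Lp, of 0 p] lim_le_aux[OF _ Lp, of p 1] by blast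
  qed
  moreover have "F (x, -\<infinity>) = 0" for x
    using lim_eq_aux[OF _ Lp] Q(1) by (auto simp: biv_quasi_distribution_def)
  moreover have "F (-\<infinity>, y) = 0" for y
    using lim_eq_aux[OF _ Lp] Q(1) by (auto simp: biv_quasi_distribution_def)
  moreover have "F (\<infinity>, \<infinity>) = 1"
    using lim_eq_aux[OF _ Lp] Q(1) by (auto simp: biv_quasi_distribution_def)
  moreover have "0 \<le> rect_volume F x1 x2 y1 y2"
    if "x1 \<le> x2" "y1 \<le> y2" "meets_boundary x1 x2 y1 y2" for x1 x2 y1 y2
    using lim_ge_aux[OF _ rect_volume_lim[OF L]] Q(1) that
    by (auto simp: biv_quasi_distribution_def)
  moreover have "F (x, \<infinity>) = FX x" for x
    using lim_eq_aux[OF _ Lp] Q(2) by (auto simp: has_margins_def)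
  moreover have "F (\<infinity>, y) = FY y" for y
    using lim_eq_aux[OF _ Lp] Q(2) by (auto simp: has_margins_def)
  ultimately show ?thesis
    by (auto simp: quasi_dists_with_margins_def biv_quasi_distribution_def has_margins_def)
qed

lemma dists_closed:
  assumes S: "\<forall>n. \<sigma> n \<in> dists_with_margins FX FY"
    and L: "\<forall>p. (\<lambda>n. \<sigma> n p) \<longlonglongrightarrow> F p"
  shows "F \<in> dists_with_margins FX FY"
proof -
  have "\<forall>n. \<sigma> n \<in> quasi_dists_with_margins FX FY"
    using S by (auto simp: quasi_dists_with_margins_def dists_with_margins_def biv_distribution_def)
  then have "F \<in> quasi_dists_with_margins FX FY" using quasi_closed L by blast
  moreover have "0 \<le> rect_volume F x1 x2 y1 y2"
    if "x1 \<le> x2" "y1 \<le> y2" for x1 x2 y1 y2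
    using lim_ge_aux[OF _ rect_volume_lim[OF L]] S that
    by (auto simp: dists_with_margins_def biv_distribution_def)
  ultimately show ?thesis
    by (auto simp: quasi_dists_with_margins_def dists_with_margins_def biv_distribution_def)
qed

lemma lip_x_aux:
  assumes Q: "biv_quasi_distribution F" and M: "has_margins F FX FY" and le: "x \<le> x'"
  shows "0 \<le> F (x', y) - F (x, y) \<and> F (x', y) - F (x, y) \<le> FX x' - FX x"
proof -
  have "0 \<le> rect_volume F x x' y \<infinity>" "0 \<le> rect_volume F x x' (-\<infinity>) y"
    using Q le unfolding biv_quasi_distribution_def by (auto simp: meets_boundary_def)
  then show ?thesis using Q M
    by (auto simp: rect_volume_def biv_quasi_distribution_def has_margins_def)
qed

lemma lip_y_aux:
  assumes Q: "biv_quasi_distribution F" and M: "has_margins F FX FY" and le: "y \<le> y'"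
  shows "0 \<le> F (x, y') - F (x, y) \<and> F (x, y') - F (x, y) \<le> FY y' - FY y"
proof -
  have "0 \<le> rect_volume F x \<infinity> y y'" "0 \<le> rect_volume F (-\<infinity>) x y y'"
    using Q le unfolding biv_quasi_distribution_def by (auto simp: meets_boundary_def)
  then show ?thesis using Q M
    by (auto simp: rect_volume_def biv_quasi_distribution_def has_margins_def)
qed

lemma lip_x:
  assumes "biv_quasi_distribution F" "has_margins F FX FY"
  shows "\<bar>F (x, y) - F (x', y)\<bar> \<le> \<bar>FX x - FX x'\<bar>"
proof (cases "x \<le> x'")
  case True then show ?thesis using lip_x_aux[OF assms True, of y] by linarith
next
  case False then have "x' \<le> x" by simp
  then show ?thesis using lip_x_aux[OF assms, of x' x y] by linarith
qed

lemma lip_y: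
  assumes "biv_quasi_distribution F" "has_margins F FX FY"
  shows "\<bar>F (x, y) - F (x, y')\<bar> \<le> \<bar>FY y - FY y'\<bar>"
proof (cases "y \<le> y'")
  case True then show ?thesis using lip_y_aux[OF assms True, of x] by linarith
next
  case False then have "y' \<le> y" by simp
  then show ?thesis using lip_y_aux[OF assms, of y' y x] by linarith
qed

theorem corollary5:
  fixes FX FY :: "ereal \<Rightarrow> real"
  assumes "univ_distribution FX" and "univ_distribution FY"
  shows "compactin uniform_topology (quasi_dists_with_margins FX FY)
       \<and> compactin uniform_topology (dists_with_margins FX FY)"
proof -
  have X: "\<forall>x. 0 \<le> FX x \<and> FX x \<le> 1" and Y: "\<forall>x. 0 \<le> FY x \<and> FY x \<le> 1"
    using assms by (auto simp: univ_distribution_def)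
  have sub: "dists_with_margins FX FY \<subseteq> quasi_dists_with_margins FX FY"
    by (auto simp: quasi_dists_with_margins_def dists_with_margins_def biv_distribution_def)
  have rngQ: "\<forall>F\<in>quasi_dists_with_margins FX FY. \<forall>p. 0 \<le> F p \<and> F p \<le> 1"
    by (auto simp: quasi_dists_with_margins_def biv_quasi_distribution_def)
  have cellsQ: "\<exists>R c. finite R \<and> (\<forall>p. c p \<in> R) \<and>
      (\<forall>F\<in>quasi_dists_with_margins FX FY. \<forall>p. \<bar>F p - F (c p)\<bar> \<le> e)" if e: "e > 0" for e
  proof -
    obtain RX cX where RX: "finite RX" "\<forall>x. cX x \<in> RX" "\<forall>x. \<bar>FX x - FX (cX x)\<bar> \<le> e/2"
      using one_dim_cells[OF X, of "e/2"] e by auto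
    obtain RY cY where RY: "finite RY" "\<forall>x. cY x \<in> RY" "\<forall>x. \<bar>FY x - FY (cY x)\<bar> \<le> e/2"
      using one_dim_cells[OF Y, of "e/2"] e by auto
    show ?thesis
    proof (intro exI conjI allI ballI)
      show "finite (RX \<times> RY)" using RX RY by simp
      show "(\<lambda>p. (cX (fst p), cY (snd p))) p \<in> RX \<times> RY" for p using RX RY by simp
      fix F and p :: "ereal \<times> ereal" assume F: "F \<in> quasi_dists_with_margins FX FY"
      then have Q: "biv_quasi_distribution F" "has_margins F FX FY"
        by (auto simp: quasi_dists_with_margins_def)
      obtain x y where p: "p = (x, y)" by (cases p)
      have "\<bar>F (x, y) - F (cX x, y)\<bar> \<le> e/2"
        using lip_x[OF Q, of x y "cX x"] RX by (meson order_trans)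
      moreover have "\<bar>F (cX x, y) - F (cX x, cY y)\<bar> \<le> e/2"
        using lip_y[OF Q, of "cX x" y "cY y"] RY by (meson order_trans)
      ultimately have "\<bar>F (x, y) - F (cX x, cY y)\<bar> \<le> e" by linarith
      then show "\<bar>F p - F ((\<lambda>p. (cX (fst p), cY (snd p))) p)\<bar> \<le> e"
        unfolding p by simp
    qed
  qed
  have "compactin uniform_topology (quasi_dists_with_margins FX FY)"
  proof (rule compact_crit[OF rngQ])
    show "F \<in> quasi_dists_with_margins FX FY"
      if "\<forall>n. \<sigma> n \<in> quasi_dists_with_margins FX FY" "\<forall>p. (\<lambda>n. \<sigma> n p) \<longlonglongrightarrow> F p" for \<sigma> F
      using quasi_closed that by blast
  qed (rule cellsQ)
  moreover have "compactin uniform_topology (dists_with_margins FX FY)"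
  proof (rule compact_crit)
    show "\<forall>F\<in>dists_with_margins FX FY. \<forall>p. 0 \<le> F p \<and> F p \<le> 1" using rngQ sub by blast
    show "F \<in> dists_with_margins FX FY"
      if "\<forall>n. \<sigma> n \<in> dists_with_margins FX FY" "\<forall>p. (\<lambda>n. \<sigma> n p) \<longlonglongrightarrow> F p" for \<sigma> F
      using dists_closed that by blast
    show "\<exists>R c. finite R \<and> (\<forall>p. c p \<in> R) \<and>
      (\<forall>F\<in>dists_with_margins FX FY. \<forall>p. \<bar>F p - F (c p)\<bar> \<le> e)" if "e > 0" for e
      using cellsQ[OF that] sub by blast
  qed
  ultimately show ?thesis by blast
qed

end
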